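(* Let $(X,d_X)$ be a metric space. (i) $X$ has the uniform Stone property if and only if $\Delta_X^{(u)}(r)>0$ for all $r>0$. (ii) $X$ has the coarse Stone property if and only if $\Delta_X^{(c)}(R)<\infty$ for all $R\in[0,\infty)$.
   Context: A family $\mathcal{U}$ of subsets of $X$ with union $X$ is a cover. $\mathrm{diam}(\mathcal{U})=\sup_{U\in\mathcal{U}}\mathrm{diam}(U)$; the Lebesgue number is $\mathcal{L}(\mathcal{U})=\sup\{d\in[0,\infty): \text{every } E\subseteq X \text{ with } \mathrm{diam}(E)<d \text{ is contained in some } U\in\mathcal{U}\}$. $\mathcal{U}$ is uniform if $\mathcal{L}(\mathcal{U})>0$, uniformly bounded if $\mathrm{diam}(\mathcal{U})<\infty$, point-finite if each point lies in only finitely many members. A cover $\mathcal{V}$ refines $\mathcal{U}$ if each $V\in\mathcal{V}$ is contained in some $U\in\mathcal{U}$. $X$ has the uniform Stone property if every uniform cover of $X$ has a point-finite uniform refinement; $X$ has the coarse Stone property if every uniformly bounded cover of $X$ refines a point-finite uniformly bounded cover. $\Delta_X^{(u)}(r)=\sup\{\mathcal{L}(\mathcal{U}): \mathcal{U} \text{ point-finite cover},\ \mathrm{diam}(\mathcal{U})\leq r\}$ and $\Delta_X^{(c)}(R)=\inf\{\mathrm{diam}(\mathcal{U}): \mathcal{U} \text{ point-finite cover},\ \mathcal{L}(\mathcal{U})\geq R\}$. *)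

theory Defs
  imports "HOL-Analysis.Analysis"
begin

text \<open>The metric space X is the whole carrier of a type of class metric_space.
Diameters and Lebesgue numbers take values in the extended reals.\<close>

definition diam :: "'a::metric_space set \<Rightarrow> ereal" where
  "diam E = (if E = {} then 0 else (SUP x\<in>E. SUP y\<in>E. ereal (dist x y)))"

definition is_cover :: "'a set set \<Rightarrow> bool" where
  "is_cover \<U> \<longleftrightarrow> \<Union>\<U> = UNIV"

definition cover_diam :: "'a::metric_space set set \<Rightarrow> ereal" where
  "cover_diam \<U> = (SUP U\<in>\<U>. diam U)"

definition lebesgue_number :: "'a::metric_space set set \<Rightarrow> ereal" where
  "lebesgue_number \<U> = Sup {ereal d | d. d \<ge> 0 \<and>
      (\<forall>E. diam E < ereal d \<longrightarrow> (\<exists>U\<in>\<U>. E \<subseteq> U))}"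

definition uniform_cover :: "'a::metric_space set set \<Rightarrow> bool" where
  "uniform_cover \<U> \<longleftrightarrow> is_cover \<U> \<and> lebesgue_number \<U> > 0"

definition uniformly_bounded_cover :: "'a::metric_space set set \<Rightarrow> bool" where
  "uniformly_bounded_cover \<U> \<longleftrightarrow> is_cover \<U> \<and> cover_diam \<U> < \<infinity>"

definition point_finite :: "'a set set \<Rightarrow> bool" where
  "point_finite \<U> \<longleftrightarrow> (\<forall>x. finite {U\<in>\<U>. x \<in> U})"

definition refines :: "'a set set \<Rightarrow> 'a set set \<Rightarrow> bool" where
  "refines \<V> \<U> \<longleftrightarrow> (\<forall>V\<in>\<V>. \<exists>U\<in>\<U>. V \<subseteq> U)"

definition uniform_Stone :: "'a::metric_space itself \<Rightarrow> bool" where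
  "uniform_Stone _ \<longleftrightarrow> (\<forall>\<U>::'a set set. uniform_cover \<U> \<longrightarrow>
     (\<exists>\<V>. uniform_cover \<V> \<and> point_finite \<V> \<and> refines \<V> \<U>))"

definition coarse_Stone :: "'a::metric_space itself \<Rightarrow> bool" where
  "coarse_Stone _ \<longleftrightarrow> (\<forall>\<U>::'a set set. uniformly_bounded_cover \<U> \<longrightarrow>
     (\<exists>\<V>. uniformly_bounded_cover \<V> \<and> point_finite \<V> \<and> refines \<U> \<V>))"

definition Delta_u :: "'a::metric_space itself \<Rightarrow> real \<Rightarrow> ereal" where
  "Delta_u _ r = Sup {lebesgue_number \<U> | \<U>::'a set set.
      is_cover \<U> \<and> point_finite \<U> \<and> cover_diam \<U> \<le> ereal r}"

definition Delta_c :: "'a::metric_space itself \<Rightarrow> real \<Rightarrow> ereal" where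
  "Delta_c _ R = Inf {cover_diam \<U> | \<U>::'a set set.
      is_cover \<U> \<and> point_finite \<U> \<and> lebesgue_number \<U> \<ge> ereal R}"

end

theory Submission
  imports Defs
begin

lemma diam_nonneg: "0 \<le> diam (E::'a::metric_space set)"
proof (cases "E = {}")
  case True then show ?thesis by (simp add: diam_def)
next
  case False
  then obtain x where x: "x \<in> E" by blast
  have "(0::ereal) = ereal (dist x x)" by simp
  also have "ereal (dist x x) \<le> (SUP y\<in>E. ereal (dist x y))" using x by (rule SUP_upper)
  also have "\<dots> \<le> (SUP x\<in>E. SUP y\<in>E. ereal (dist x y))" using x by (rule SUP_upper)
  finally show ?thesis using False by (simp add: diam_def)
qed

lemma diam_dist: "x \<in> E \<Longrightarrow> y \<in> E \<Longrightarrow> ereal (dist x y) \<le> diam (E::'a::metric_space set)"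
proof -
  assume x: "x \<in> E" and y: "y \<in> E"
  have "ereal (dist x y) \<le> (SUP y\<in>E. ereal (dist x y))" using y by (rule SUP_upper)
  also have "\<dots> \<le> (SUP x\<in>E. SUP y\<in>E. ereal (dist x y))" using x by (rule SUP_upper)
  finally show ?thesis using x by (auto simp add: diam_def)
qed

lemma diam_le: assumes "r \<ge> 0" "\<And>x y. x \<in> E \<Longrightarrow> y \<in> E \<Longrightarrow> dist x y \<le> r"
  shows "diam (E::'a::metric_space set) \<le> ereal r"
proof (cases "E = {}")
  case True then show ?thesis using assms by (simp add: diam_def)
next
  case False
  have "(SUP x\<in>E. SUP y\<in>E. ereal (dist x y)) \<le> ereal r"
    by (intro SUP_least) (use assms in auto)
  then show ?thesis using False by (simp add: diam_def)
qed

lemma lebesgue_use: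
  assumes "diam E < lebesgue_number \<U>" shows "\<exists>U\<in>\<U>. E \<subseteq> U"
proof -
  from assms obtain z where z: "z \<in> {ereal d | d. d \<ge> 0 \<and>
      (\<forall>E. diam E < ereal d \<longrightarrow> (\<exists>U\<in>\<U>. E \<subseteq> U))}" "diam E < z"
    unfolding lebesgue_number_def by (auto simp: less_Sup_iff)
  then show ?thesis by auto
qed

lemma lebesgue_pos:
  assumes "lebesgue_number \<U> > 0"
  shows "\<exists>d>0. \<forall>E. diam E < ereal d \<longrightarrow> (\<exists>U\<in>\<U>. E \<subseteq> U)"
proof -
  from assms obtain z where z: "z \<in> {ereal d | d. d \<ge> 0 \<and>
      (\<forall>E. diam E < ereal d \<longrightarrow> (\<exists>U\<in>\<U>. E \<subseteq> U))}" "0 < z"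
    unfolding lebesgue_number_def by (auto simp: less_Sup_iff)
  then show ?thesis by auto
qed

lemma lebesgue_ge:
  assumes "d \<ge> 0" "\<And>E. diam E < ereal d \<Longrightarrow> \<exists>U\<in>\<U>. E \<subseteq> U"
  shows "ereal d \<le> lebesgue_number \<U>"
  unfolding lebesgue_number_def by (rule Sup_upper) (use assms in auto)

lemma cover_diam_le: "(\<And>U. U \<in> \<U> \<Longrightarrow> diam U \<le> c) \<Longrightarrow> cover_diam \<U> \<le> c"
  unfolding cover_diam_def by (rule SUP_least)

lemma diam_le_cover_diam: "U \<in> \<U> \<Longrightarrow> diam U \<le> cover_diam \<U>"
  unfolding cover_diam_def by (rule SUP_upper)

lemma part1: "uniform_Stone (X::'a::metric_space itself) \<longleftrightarrow> (\<forall>r>0. Delta_u X r > 0)"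
proof
  assume S: "uniform_Stone X"
  show "\<forall>r>0. Delta_u X r > 0"
  proof (intro allI impI)
    fix r :: real assume r: "r > 0"
    define \<U> :: "'a set set" where "\<U> = range (\<lambda>x. ball x (r/2))"
    have cov: "is_cover \<U>" unfolding is_cover_def \<U>_def using r by force
    have "ereal (r/2) \<le> lebesgue_number \<U>"
    proof (rule lebesgue_ge)
      show "0 \<le> r/2" using r by simp
      fix E :: "'a set" assume E: "diam E < ereal (r/2)"
      show "\<exists>U\<in>\<U>. E \<subseteq> U"
      proof (cases "E = {}")
        case True then show ?thesis unfolding \<U>_def by auto
      next
        case False
        then obtain x where x: "x \<in> E" by blast
        have "E \<subseteq> ball x (r/2)"
        proof
          fix y assume "y \<in> E"
          then have "ereal (dist x y) < ereal (r/2)" using diam_dist[OF x] E by (meson le_less_trans)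
          then show "y \<in> ball x (r/2)" by simp
        qed
        then show ?thesis unfolding \<U>_def by auto
      qed
    qed
    then have "lebesgue_number \<U> > 0" using r
      by (metis ereal_less(2) half_gt_zero less_le_trans)
    then have "uniform_cover \<U>" using cov by (simp add: uniform_cover_def)
    then obtain \<V> where V: "uniform_cover \<V>" "point_finite \<V>" "refines \<V> \<U>"
      using S unfolding uniform_Stone_def by blast
    have "cover_diam \<V> \<le> ereal r"
    proof (rule cover_diam_le)
      fix V assume "V \<in> \<V>"
      then obtain x where Vx: "V \<subseteq> ball x (r/2)" using V(3) unfolding refines_def \<U>_def by auto
      show "diam V \<le> ereal r"
      proof (rule diam_le)
        show "0 \<le> r" using r by simp
        fix y z assume "y \<in> V" "z \<in> V"
        then have "dist x y < r/2" "dist x z < r/2" using Vx by auto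
        then show "dist y z \<le> r" using dist_triangle[of y z x] dist_commute[of x y] by linarith
      qed
    qed
    then have "lebesgue_number \<V> \<le> Delta_u X r"
      unfolding Delta_u_def using V by (intro Sup_upper) (auto simp: uniform_cover_def)
    moreover have "lebesgue_number \<V> > 0" using V by (simp add: uniform_cover_def)
    ultimately show "Delta_u X r > 0" by simp
  qed
next
  assume D: "\<forall>r>0. Delta_u X r > 0"
  show "uniform_Stone X" unfolding uniform_Stone_def
  proof (intro allI impI)
    fix \<U> :: "'a set set" assume U: "uniform_cover \<U>"
    then obtain d where d: "d > 0" "\<forall>E. diam E < ereal d \<longrightarrow> (\<exists>U\<in>\<U>. E \<subseteq> U)"
      using lebesgue_pos[of \<U>] U unfolding uniform_cover_def by auto
    have "Delta_u X (d/2) > 0" using D d by simp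
    then obtain z where z: "z \<in> {lebesgue_number \<V> | \<V>::'a set set.
      is_cover \<V> \<and> point_finite \<V> \<and> cover_diam \<V> \<le> ereal (d/2)}" "0 < z"
      unfolding Delta_u_def by (subst (asm) less_Sup_iff) blast
    then obtain \<V> :: "'a set set" where V: "is_cover \<V>" "point_finite \<V>"
      "cover_diam \<V> \<le> ereal (d/2)" "lebesgue_number \<V> > 0" by auto
    have "refines \<V> \<U>" unfolding refines_def
    proof
      fix V assume "V \<in> \<V>"
      then have "diam V \<le> ereal (d/2)" using diam_le_cover_diam V(3) by (metis order_trans)
      also have "\<dots> < ereal d" using d by simp
      finally show "\<exists>U\<in>\<U>. V \<subseteq> U" using d(2) by simp
    qed
    then show "\<exists>\<V>. uniform_cover \<V> \<and> point_finite \<V> \<and> refines \<V> \<U>"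
      using V by (auto simp: uniform_cover_def)
  qed
qed

lemma part2: "coarse_Stone (X::'a::metric_space itself) \<longleftrightarrow> (\<forall>R\<ge>0. Delta_c X R < \<infinity>)"
proof
  assume S: "coarse_Stone X"
  show "\<forall>R\<ge>0. Delta_c X R < \<infinity>"
  proof (intro allI impI)
    fix R :: real assume R: "R \<ge> 0"
    define \<U> :: "'a set set" where "\<U> = range (\<lambda>x. cball x R)"
    have cov: "is_cover \<U>" unfolding is_cover_def \<U>_def using R by force
    have L: "\<And>E. diam E < ereal R \<Longrightarrow> \<exists>U\<in>\<U>. E \<subseteq> U"
    proof -
      fix E :: "'a set" assume E: "diam E < ereal R"
      show "\<exists>U\<in>\<U>. E \<subseteq> U"
      proof (cases "E = {}")
        case True then show ?thesis unfolding \<U>_def by auto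
      next
        case False
        then obtain x where x: "x \<in> E" by blast
        have "E \<subseteq> cball x R"
        proof
          fix y assume "y \<in> E"
          then have "ereal (dist x y) < ereal R" using diam_dist[OF x] E by (meson le_less_trans)
          then show "y \<in> cball x R" by simp
        qed
        then show ?thesis unfolding \<U>_def by auto
      qed
    qed
    have "cover_diam \<U> \<le> ereal (2*R)"
    proof (rule cover_diam_le)
      fix U assume "U \<in> \<U>"
      then obtain x where Ux: "U = cball x R" unfolding \<U>_def by auto
      show "diam U \<le> ereal (2*R)"
      proof (rule diam_le)
        show "0 \<le> 2*R" using R by simp
        fix y z assume "y \<in> U" "z \<in> U"
        then have "dist x y \<le> R" "dist x z \<le> R" using Ux by auto
        then show "dist y z \<le> 2*R" using dist_triangle[of y z x] dist_commute[of x y] by linarith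
      qed
    qed
    then have "uniformly_bounded_cover \<U>" using cov
      by (auto simp: uniformly_bounded_cover_def)
    then obtain \<V> where V: "uniformly_bounded_cover \<V>" "point_finite \<V>" "refines \<U> \<V>"
      using S unfolding coarse_Stone_def by blast
    have "ereal R \<le> lebesgue_number \<V>"
    proof (rule lebesgue_ge[OF R])
      fix E :: "'a set" assume "diam E < ereal R"
      then obtain U where "U \<in> \<U>" "E \<subseteq> U" using L by blast
      moreover obtain V where "V \<in> \<V>" "U \<subseteq> V" using V(3) \<open>U \<in> \<U>\<close> unfolding refines_def by meson
      ultimately show "\<exists>V\<in>\<V>. E \<subseteq> V" by (meson subset_trans)
    qed
    then have "Delta_c X R \<le> cover_diam \<V>"
      unfolding Delta_c_def using V by (intro Inf_lower) (auto simp: uniformly_bounded_cover_def)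
    moreover have "cover_diam \<V> < \<infinity>" using V by (simp add: uniformly_bounded_cover_def)
    ultimately show "Delta_c X R < \<infinity>" by (rule le_less_trans)
  qed
next
  assume D: "\<forall>R\<ge>0. Delta_c X R < \<infinity>"
  show "coarse_Stone X" unfolding coarse_Stone_def
  proof (intro allI impI)
    fix \<U> :: "'a set set" assume U: "uniformly_bounded_cover \<U>"
    then have Uf: "cover_diam \<U> < \<infinity>" by (simp add: uniformly_bounded_cover_def)
    then obtain D0 :: real where D0: "cover_diam \<U> \<le> ereal D0"
      by (cases "cover_diam \<U>") (auto intro: order.refl[of "ereal 0"] simp: ereal_less_PInfty)
    define R where "R = max 0 D0 + 1"
    have "Delta_c X R < \<infinity>" using D R_def by simp
    then obtain z where z: "z \<in> {cover_diam \<V> | \<V>::'a set set.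
      is_cover \<V> \<and> point_finite \<V> \<and> lebesgue_number \<V> \<ge> ereal R}" "z < \<infinity>"
      unfolding Delta_c_def by (subst (asm) Inf_less_iff) blast
    then obtain \<V> :: "'a set set" where V: "is_cover \<V>" "point_finite \<V>"
      "lebesgue_number \<V> \<ge> ereal R" "cover_diam \<V> < \<infinity>" by auto
    have "refines \<U> \<V>" unfolding refines_def
    proof
      fix U assume "U \<in> \<U>"
      then have "diam U \<le> ereal D0" using diam_le_cover_diam D0 by (metis order_trans)
      also have "\<dots> < ereal R" unfolding R_def by simp
      also have "\<dots> \<le> lebesgue_number \<V>" by (rule V(3))
      finally show "\<exists>V\<in>\<V>. U \<subseteq> V" by (rule lebesgue_use)
    qed
    then show "\<exists>\<V>. uniformly_bounded_cover \<V> \<and> point_finite \<V> \<and> refines \<U> \<V>"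
      using V by (auto simp: uniformly_bounded_cover_def)
  qed
qed

theorem proposition3p3:
  fixes X :: "'a::metric_space itself"
  shows "(uniform_Stone X \<longleftrightarrow> (\<forall>r>0. Delta_u X r > 0)) \<and>
         (coarse_Stone X \<longleftrightarrow> (\<forall>R\<ge>0. Delta_c X R < \<infinity>))"
  using part1 part2 by blast

end
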